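(* Let $V$ be a finite nonempty set and $f:\{0,1\}^V\to\{0,1\}^V$ an and-net. Every subnetwork of $f$ has at most one fixed point if and only if $f$ has no positive-circular subnetwork.
   Context: For nonempty $I\subseteq V$ and $z\in\{0,1\}^{V\setminus I}$, the subnetwork of $f$ induced by $z$ is $h:\{0,1\}^I\to\{0,1\}^I$ with $h(x|_I)=f(x)|_I$ for all $x$ whose restriction to $V\setminus I$ is $z$ ($f$ is a subnetwork of itself). For a network $g$ on $W$ and $x^{j\alpha}$ the point equal to $x$ except its $j$-component is $\alpha$, the global interaction graph $G(g)$ is the signed digraph on $W$ with a positive (resp. negative) arc from $j$ to $i$ iff $g_i(x^{j1})-g_i(x^{j0})=1$ (resp. $=-1$) for at least one $x$. $f$ is an and-net if $G(f)$ has at most one arc from $j$ to $i$ for all $i,j$ and for every $i$ and $x$: $f_i(x)=1$ iff $G(f)$ has no positive arc $j\to i$ with $x_j=0$ and no negative arc $j\to i$ with $x_j=1$. A cycle is a subgraph with at most one arc between any ordered pair whose underlying unsigned digraph is a directed cycle; positive if it has an even number of negative arcs. $g$ is positive-circular if $G(g)$ itself is a positive cycle through all vertices of $W$. *)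

theory Defs
  imports Main
begin

text \<open>A point of {0,1}^W is a map x :: 'v \<Rightarrow> bool that is False outside W.
  A network on W is a map g on such points; only its values on conf W and
  its components in W matter.\<close>

definition conf :: "'v set \<Rightarrow> ('v \<Rightarrow> bool) set" where
  "conf W = {x. \<forall>j. j \<notin> W \<longrightarrow> x j = False}"

definition pos_arc :: "'v set \<Rightarrow> (('v \<Rightarrow> bool) \<Rightarrow> ('v \<Rightarrow> bool)) \<Rightarrow> 'v \<Rightarrow> 'v \<Rightarrow> bool" where
  "pos_arc W g j i \<longleftrightarrow> j \<in> W \<and> i \<in> W \<and>
     (\<exists>x\<in>conf W. g (x(j := True)) i \<and> \<not> g (x(j := False)) i)"

definition neg_arc :: "'v set \<Rightarrow> (('v \<Rightarrow> bool) \<Rightarrow> ('v \<Rightarrow> bool)) \<Rightarrow> 'v \<Rightarrow> 'v \<Rightarrow> bool" where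
  "neg_arc W g j i \<longleftrightarrow> j \<in> W \<and> i \<in> W \<and>
     (\<exists>x\<in>conf W. \<not> g (x(j := True)) i \<and> g (x(j := False)) i)"

definition and_net :: "'v set \<Rightarrow> (('v \<Rightarrow> bool) \<Rightarrow> ('v \<Rightarrow> bool)) \<Rightarrow> bool" where
  "and_net V f \<longleftrightarrow>
     (\<forall>i\<in>V. \<forall>j\<in>V. \<not> (pos_arc V f j i \<and> neg_arc V f j i)) \<and>
     (\<forall>i\<in>V. \<forall>x\<in>conf V. f x i \<longleftrightarrow>
        (\<forall>j\<in>V. (pos_arc V f j i \<longrightarrow> x j) \<and> (neg_arc V f j i \<longrightarrow> \<not> x j)))"

definition subnet :: "'v set \<Rightarrow> (('v \<Rightarrow> bool) \<Rightarrow> ('v \<Rightarrow> bool)) \<Rightarrow> 'v set \<Rightarrow> ('v \<Rightarrow> bool)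
    \<Rightarrow> (('v \<Rightarrow> bool) \<Rightarrow> ('v \<Rightarrow> bool))" where
  "subnet V f I z = (\<lambda>y i. if i \<in> I then f (\<lambda>j. if j \<in> I then y j else z j) i else False)"

definition at_most_one_fixed_point :: "'v set \<Rightarrow> (('v \<Rightarrow> bool) \<Rightarrow> ('v \<Rightarrow> bool)) \<Rightarrow> bool" where
  "at_most_one_fixed_point W g \<longleftrightarrow>
     (\<forall>x\<in>conf W. \<forall>y\<in>conf W. (\<forall>i\<in>W. g x i = x i) \<longrightarrow> (\<forall>i\<in>W. g y i = y i) \<longrightarrow> x = y)"

definition positive_circular :: "'v set \<Rightarrow> (('v \<Rightarrow> bool) \<Rightarrow> ('v \<Rightarrow> bool)) \<Rightarrow> bool" where
  "positive_circular W g \<longleftrightarrow>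
     (\<forall>j i. \<not> (pos_arc W g j i \<and> neg_arc W g j i)) \<and>
     (\<exists>vs. vs \<noteq> [] \<and> distinct vs \<and> set vs = W \<and>
        {(j, i). pos_arc W g j i \<or> neg_arc W g j i} =
        {(vs ! k, vs ! (Suc k mod length vs)) | k. k < length vs}) \<and>
     even (card {(j, i). neg_arc W g j i})"

end

theory Submission
  imports Defs
begin

definition act :: "('v \<Rightarrow> 'v set) \<Rightarrow> ('v \<Rightarrow> bool) \<Rightarrow> 'v set \<Rightarrow> 'v \<Rightarrow> bool" where
  "act N P S i = (if P i then N i \<subseteq> S else N i \<inter> S \<noteq> {})"

fun sp :: "('v \<Rightarrow> 'v set) \<Rightarrow> 'v set \<Rightarrow> ('v \<Rightarrow> bool) \<Rightarrow> 'v \<Rightarrow> nat \<Rightarrow> 'v set" where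
  "sp N I P w 0 = {w}"
| "sp N I P w (Suc k) = sp N I P w k \<union> {i\<in>I. act N P (sp N I P w k) i}"

definition spf :: "('v \<Rightarrow> 'v set) \<Rightarrow> 'v set \<Rightarrow> ('v \<Rightarrow> bool) \<Rightarrow> 'v \<Rightarrow> 'v set" where
  "spf N I P w = (\<Union>k. sp N I P w k)"

lemma act_mono: "S \<subseteq> T \<Longrightarrow> act N P S i \<Longrightarrow> act N P T i"
  unfolding act_def by (auto split: if_splits)

lemma sp_mono: "k \<le> m \<Longrightarrow> sp N I P w k \<subseteq> sp N I P w m"
  by (induction m) (auto simp: le_Suc_eq)

lemma sp_sub: "w \<in> I \<Longrightarrow> sp N I P w k \<subseteq> I"
  by (induction k) auto

lemma spf_sub: "w \<in> I \<Longrightarrow> spf N I P w \<subseteq> I"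
  unfolding spf_def using sp_sub[of w I N P] by (simp add: UN_least)

lemma w_spf: "w \<in> spf N I P w"
proof -
  have "w \<in> sp N I P w 0" by simp
  then show ?thesis unfolding spf_def by blast
qed

lemma sp_spf: "sp N I P w k \<subseteq> spf N I P w"
  unfolding spf_def by (rule UN_upper) (rule UNIV_I)

lemma finite_in_sp:
  assumes "finite A" "A \<subseteq> spf N I P w"
  shows "\<exists>K. A \<subseteq> sp N I P w K"
  using assms
proof (induction A rule: finite_induct)
  case empty then show ?case by auto
next
  case (insert a A)
  then obtain K where K: "A \<subseteq> sp N I P w K" by auto
  from insert have "a \<in> spf N I P w" by auto
  then obtain K' where "a \<in> sp N I P w K'" unfolding spf_def by auto
  then have "insert a A \<subseteq> sp N I P w (max K K')"
    using K sp_mono[of K "max K K'" N I P w] sp_mono[of K' "max K K'" N I P w] by auto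
  then show ?case by blast
qed

lemma spf_closed:
  assumes "finite (N i)" "i \<in> I" "act N P (spf N I P w) i"
  shows "i \<in> spf N I P w"
proof -
  have "\<exists>K. act N P (sp N I P w K) i"
  proof (cases "P i")
    case True
    then have "N i \<subseteq> spf N I P w" using assms(3) by (simp add: act_def)
    then obtain K where "N i \<subseteq> sp N I P w K" using finite_in_sp[OF assms(1)] by blast
    then have "act N P (sp N I P w K) i" using True by (simp add: act_def)
    then show ?thesis by blast
  next
    case False
    then obtain j where j: "j \<in> N i" "j \<in> spf N I P w" using assms(3) unfolding act_def by auto
    then obtain K where "j \<in> sp N I P w K" unfolding spf_def by blast
    then have "act N P (sp N I P w K) i" using False j(1) unfolding act_def by auto
    then show ?thesis by blast
  qed
  then obtain K where "act N P (sp N I P w K) i" by blast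
  then have "i \<in> sp N I P w (Suc K)" using assms(2) by simp
  then show ?thesis using sp_spf[of N I P w "Suc K"] by blast
qed

lemma spf_act:
  assumes "i \<in> spf N I P w"
  shows "i = w \<or> act N P (spf N I P w) i"
proof -
  obtain k where "i \<in> sp N I P w k" using assms unfolding spf_def by auto
  then show ?thesis
  proof (induction k)
    case 0 then show ?case by simp
  next
    case (Suc k)
    then have "i \<in> sp N I P w k \<or> act N P (sp N I P w k) i" by auto
    then show ?case using Suc.IH act_mono[OF sp_spf[of N I P w k]] by blast
  qed
qed

lemma sp_stall:
  assumes "sp N I P w (Suc 0) = sp N I P w 0"
  shows "sp N I P w k = {w}"
proof (induction k)
  case 0 then show ?case by simp
next
  case (Suc k)
  then show ?case using assms by simp
qed

lemma spf_stall:
  assumes "sp N I P w (Suc 0) = sp N I P w 0"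
  shows "spf N I P w = {w}"
  unfolding spf_def using sp_stall[OF assms] by simp

lemma LV:
  assumes fin: "finite I"
    and NI: "\<forall>i\<in>I. N i \<subseteq> I \<and> N i \<noteq> {}"
    and comp: "\<forall>i\<in>I. Q i = (\<not> P i)"
    and w: "w \<in> I" "\<not> P w"
    and two: "v0 \<in> I" "v0 \<noteq> w"
    and cP: "spf N I P w = I"
    and cQ: "\<forall>l\<in>I. spf N I Q l = I"
  shows "\<exists>l. N w = {l}"
proof -
  define t where "t v = (LEAST k. v \<in> sp N I P w k)" for v
  have tin: "v \<in> sp N I P w (t v)" if "v \<in> I" for v
  proof -
    from that cP have "v \<in> spf N I P w" by simp
    then obtain k where "v \<in> sp N I P w k" unfolding spf_def by blast
    then show ?thesis unfolding t_def by (rule LeastI)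
  qed
  have tle: "t v \<le> k" if "v \<in> sp N I P w k" for v k
    unfolding t_def using that by (rule Least_le)
  have tw: "t w = 0" using tle[of w 0] by simp
  have tpos: "t v > 0" if "v \<in> I" "v \<noteq> w" for v
  proof (rule ccontr)
    assume "\<not> 0 < t v"
    then have "t v = 0" by simp
    with tin[OF that(1)] have "v \<in> sp N I P w 0" by simp
    with that(2) show False by simp
  qed
  have tact: "act N P (sp N I P w (t v - 1)) v" if "v \<in> I" "v \<noteq> w" for v
  proof -
    have "Suc (t v - 1) = t v" using tpos[OF that] by simp
    then have "v \<in> sp N I P w (Suc (t v - 1))" using tin[OF that(1)] by simp
    moreover have "v \<notin> sp N I P w (t v - 1)"
    proof
      assume "v \<in> sp N I P w (t v - 1)"
      then have "t v \<le> t v - 1" by (rule tle)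
      with tpos[OF that] show False by simp
    qed
    ultimately show ?thesis by simp
  qed
  have ne: "I \<noteq> {}" using w by auto
  define l where "l = (SOME l. l \<in> I \<and> t l = Max (t ` I))"
  have "\<exists>l. l \<in> I \<and> t l = Max (t ` I)"
  proof -
    have "Max (t ` I) \<in> t ` I" using fin ne by simp
    then show ?thesis by auto
  qed
  then have l: "l \<in> I" "t l = Max (t ` I)" unfolding l_def by (metis (mono_tags, lifting) someI_ex)+
  have lmax: "t v \<le> t l" if "v \<in> I" for v
    using l(2) fin that by simp
  have lw: "l \<noteq> w"
  proof
    assume "l = w"
    then have "t v0 \<le> 0" using lmax[OF two(1)] tw by simp
    with tpos[OF two] show False by simp
  qed
  have key: "\<not> P v \<and> (\<exists>j\<in>N v. j \<noteq> l)" if "v \<in> I" "v \<noteq> w" "l \<in> N v" for v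
  proof -
    let ?k = "t v - 1"
    have a: "act N P (sp N I P w ?k) v" by (rule tact[OF that(1,2)])
    have lt: "?k < t l" using tpos[OF that(1,2)] lmax[OF that(1)] by simp
    show ?thesis
    proof (cases "P v")
      case True
      then have "N v \<subseteq> sp N I P w ?k" using a by (simp add: act_def)
      then have "l \<in> sp N I P w ?k" using that(3) by blast
      then have "t l \<le> ?k" by (rule tle)
      with lt show ?thesis by simp
    next
      case False
      then obtain j where j: "j \<in> N v" "j \<in> sp N I P w ?k" using a unfolding act_def by auto
      have "t j \<le> ?k" using j(2) by (rule tle)
      then have "j \<noteq> l" using lt by auto
      with j(1) False show ?thesis by blast
    qed
  qed
  have "sp N I Q l (Suc 0) \<noteq> sp N I Q l 0"
  proof
    assume "sp N I Q l (Suc 0) = sp N I Q l 0"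
    then have "spf N I Q l = {l}" by (rule spf_stall)
    then have "I = {l}" using cQ l(1) by simp
    with w(1) lw show False by simp
  qed
  then obtain v where v: "v \<in> I" "act N Q {l} v" "v \<noteq> l"
    by auto
  have lv: "l \<in> N v"
  proof (cases "Q v")
    case True
    then have "N v \<subseteq> {l}" using v(2) by (simp add: act_def)
    then show ?thesis using NI v(1) by blast
  next
    case False
    then show ?thesis using v(2) by (auto simp: act_def)
  qed
  have vw: "v = w"
  proof (rule ccontr)
    assume "v \<noteq> w"
    from key[OF v(1) this lv] obtain j where "\<not> P v" "j \<in> N v" "j \<noteq> l" by blast
    then have "Q v" using comp v(1) by simp
    then have "N v \<subseteq> {l}" using v(2) by (simp add: act_def)
    with \<open>j \<in> N v\<close> \<open>j \<noteq> l\<close> show False by blast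
  qed
  have "Q w" using comp w by simp
  then have "N w \<subseteq> {l}" using v(2) vw by (simp add: act_def)
  then have "N w = {l}" using NI w(1) by blast
  then show ?thesis by blast
qed

definition NB :: "'v set \<Rightarrow> (('v \<Rightarrow> bool) \<Rightarrow> ('v \<Rightarrow> bool)) \<Rightarrow> 'v set \<Rightarrow> 'v \<Rightarrow> 'v set" where
  "NB V f I i = {j\<in>I. pos_arc V f j i \<or> neg_arc V f j i}"

definition good :: "'v set \<Rightarrow> (('v \<Rightarrow> bool) \<Rightarrow> ('v \<Rightarrow> bool)) \<Rightarrow> 'v set \<Rightarrow> ('v \<Rightarrow> bool) \<Rightarrow> ('v \<Rightarrow> bool) \<Rightarrow> bool" where
  "good V f I P Q \<longleftrightarrow> I \<subseteq> V \<and> P \<in> conf V \<and> Q \<in> conf V \<and> (\<forall>j. j \<notin> I \<longrightarrow> P j = Q j) \<and>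
     (\<forall>i\<in>I. f P i = P i \<and> f Q i = Q i)"

lemma good_sym: "good V f I P Q \<Longrightarrow> good V f I Q P"
  unfolding good_def by auto

lemma NB_sub: "NB V f I i \<subseteq> I"
  unfolding NB_def by auto

lemma K0:
  assumes an: "and_net V f" and iI: "i \<in> I" and IV: "I \<subseteq> V"
    and R: "R \<in> conf V" "f R i"
    and W: "W \<in> conf V" "\<forall>j. j \<notin> I \<longrightarrow> W j = R j"
  shows "f W i = (\<forall>j\<in>NB V f I i. W j = R j)"
proof -
  have iV: "i \<in> V" using iI IV by auto
  have ch: "\<And>X. X \<in> conf V \<Longrightarrow> f X i \<longleftrightarrow>
        (\<forall>j\<in>V. (pos_arc V f j i \<longrightarrow> X j) \<and> (neg_arc V f j i \<longrightarrow> \<not> X j))"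
    using an iV unfolding and_net_def by blast
  have Rl: "\<forall>j\<in>V. (pos_arc V f j i \<longrightarrow> R j) \<and> (neg_arc V f j i \<longrightarrow> \<not> R j)"
    using ch[OF R(1)] R(2) by blast
  show ?thesis
  proof
    assume "f W i"
    then have Wl: "\<forall>j\<in>V. (pos_arc V f j i \<longrightarrow> W j) \<and> (neg_arc V f j i \<longrightarrow> \<not> W j)"
      using ch[OF W(1)] by blast
    show "\<forall>j\<in>NB V f I i. W j = R j"
    proof
      fix j assume j: "j \<in> NB V f I i"
      then have jV: "j \<in> V" "pos_arc V f j i \<or> neg_arc V f j i" using IV unfolding NB_def by auto
      then show "W j = R j" using Wl Rl by blast
    qed
  next
    assume a: "\<forall>j\<in>NB V f I i. W j = R j"
    have "\<forall>j\<in>V. (pos_arc V f j i \<longrightarrow> W j) \<and> (neg_arc V f j i \<longrightarrow> \<not> W j)"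
    proof
      fix j assume jV: "j \<in> V"
      show "(pos_arc V f j i \<longrightarrow> W j) \<and> (neg_arc V f j i \<longrightarrow> \<not> W j)"
      proof (cases "j \<in> I")
        case True
        show ?thesis
        proof (cases "pos_arc V f j i \<or> neg_arc V f j i")
          case True
          with \<open>j \<in> I\<close> have "j \<in> NB V f I i" unfolding NB_def by auto
          with a have "W j = R j" by blast
          with Rl jV show ?thesis by simp
        next
          case False then show ?thesis by simp
        qed
      next
        case False
        then have "W j = R j" using W(2) by simp
        with Rl jV show ?thesis by simp
      qed
    qed
    then show "f W i" using ch[OF W(1)] by blast
  qed
qed

lemma K:
  assumes an: "and_net V f" and g: "good V f I P Q" and comp: "\<forall>i\<in>I. Q i = (\<not> P i)"
    and iI: "i \<in> I" and W: "W \<in> conf V" "\<forall>j. j \<notin> I \<longrightarrow> W j = P j"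
  shows "f W i = (if P i then (\<forall>j\<in>NB V f I i. W j = P j) else (\<forall>j\<in>NB V f I i. W j \<noteq> P j))"
proof (cases "P i")
  case True
  have "f P i" using g iI True unfolding good_def by auto
  then have "f W i = (\<forall>j\<in>NB V f I i. W j = P j)"
    using K0[OF an iI _ _ _ W] g unfolding good_def by blast
  then show ?thesis using True by simp
next
  case False
  have "f Q i" using g iI False comp unfolding good_def by auto
  moreover have "\<forall>j. j \<notin> I \<longrightarrow> W j = Q j" using W(2) g unfolding good_def by auto
  ultimately have "f W i = (\<forall>j\<in>NB V f I i. W j = Q j)"
    using K0[OF an iI _ _ _ W(1)] g unfolding good_def by blast
  moreover have "(\<forall>j\<in>NB V f I i. W j = Q j) = (\<forall>j\<in>NB V f I i. W j \<noteq> P j)"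
    using comp NB_sub[of V f I i] by auto
  ultimately show ?thesis using False by simp
qed

lemma NB_ne:
  assumes an: "and_net V f" and g: "good V f I P Q" and comp: "\<forall>i\<in>I. Q i = (\<not> P i)"
    and iI: "i \<in> I"
  shows "NB V f I i \<noteq> {}"
proof
  assume e: "NB V f I i = {}"
  have P: "P \<in> conf V" "\<forall>j. j \<notin> I \<longrightarrow> P j = P j" using g unfolding good_def by auto
  have Q: "Q \<in> conf V" "\<forall>j. j \<notin> I \<longrightarrow> Q j = P j" using g unfolding good_def by auto
  show False
  proof (cases "P i")
    case True
    have "f Q i" using K[OF an g comp iI Q] True e by simp
    moreover have "f Q i = Q i" using g iI unfolding good_def by auto
    ultimately show False using comp iI True by simp
  next
    case False
    have "f P i" using K[OF an g comp iI P] False e by simp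
    moreover have "f P i = P i" using g iI unfolding good_def by auto
    ultimately show False using False by simp
  qed
qed

lemma REC:
  assumes an: "and_net V f" and g: "good V f I P Q" and comp: "\<forall>i\<in>I. Q i = (\<not> P i)"
    and fin: "finite I" and wI: "w \<in> I" and inc: "spf (NB V f I) I P w \<noteq> I"
  shows "\<exists>W. good V f (I - {w}) P W \<and> P \<noteq> W \<and> I - {w} \<noteq> {}"
proof -
  let ?N = "NB V f I"
  define S where "S = spf ?N I P w"
  have SI: "S \<subseteq> I" unfolding S_def using spf_sub[OF wI] .
  have wS: "w \<in> S" unfolding S_def by (rule w_spf)
  obtain i0 where i0: "i0 \<in> I" "i0 \<notin> S" using SI inc unfolding S_def by blast
  define W where "W = (\<lambda>j. if j \<in> I \<and> j \<notin> S then Q j else P j)"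
  have IV: "I \<subseteq> V" and Pc: "P \<in> conf V" and Qc: "Q \<in> conf V" and PQ: "\<forall>j. j \<notin> I \<longrightarrow> P j = Q j"
    using g unfolding good_def by auto
  have Wc: "W \<in> conf V" using Pc Qc unfolding W_def conf_def by auto
  have Woff: "\<forall>j. j \<notin> I \<longrightarrow> W j = P j" unfolding W_def by auto
  have WP: "W j = P j \<longleftrightarrow> j \<in> S" if "j \<in> I" for j
    using that comp unfolding W_def by auto
  have fixW: "f W i = W i" if iI: "i \<in> I" "i \<noteq> w" for i
  proof -
    have fW: "f W i = (if P i then (\<forall>j\<in>?N i. W j = P j) else (\<forall>j\<in>?N i. W j \<noteq> P j))"
      by (rule K[OF an g comp iI(1) Wc Woff])
    have eq1: "(\<forall>j\<in>?N i. W j = P j) = (?N i \<subseteq> S)" using WP NB_sub[of V f I i] by blast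
    have eq2: "(\<forall>j\<in>?N i. W j \<noteq> P j) = (?N i \<inter> S = {})" using WP NB_sub[of V f I i] by blast
    show ?thesis
    proof (cases "i \<in> S")
      case True
      then have "act ?N P S i" using spf_act[of i ?N I P w] iI(2) unfolding S_def by blast
      moreover have "W i = P i" using True WP iI(1) by simp
      ultimately show ?thesis using fW eq1 eq2 unfolding act_def by (auto split: if_splits)
    next
      case False
      have finN: "finite (?N i)" using fin NB_sub[of V f I i] finite_subset by blast
      have "\<not> act ?N P S i"
      proof
        assume "act ?N P S i"
        then have "i \<in> S" using spf_closed[of ?N i I P w] finN iI(1) unfolding S_def by blast
        with False show False by simp
      qed
      moreover have "W i = Q i" using False iI(1) unfolding W_def by simp
      ultimately show ?thesis using fW eq1 eq2 comp iI(1) unfolding act_def by (auto split: if_splits)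
    qed
  qed
  have "good V f (I - {w}) P W"
    unfolding good_def
  proof (intro conjI allI impI ballI)
    show "I - {w} \<subseteq> V" using IV by auto
    show "P \<in> conf V" by (rule Pc)
    show "W \<in> conf V" by (rule Wc)
    fix j assume "j \<notin> I - {w}"
    then show "P j = W j" using Woff WP[of w] wS wI by (cases "j = w") auto
  next
    fix i assume "i \<in> I - {w}"
    then show "f P i = P i" using g unfolding good_def by auto
  next
    fix i assume "i \<in> I - {w}"
    then show "f W i = W i" using fixW by auto
  qed
  moreover have "P \<noteq> W" using WP[OF i0(1)] i0(2) by auto
  moreover have "I - {w} \<noteq> {}" using i0 wS by auto
  ultimately show ?thesis by blast
qed

lemma cyc:
  assumes fin: "finite I" and w0: "w0 \<in> I" and pI: "\<forall>i\<in>I. p i \<in> I"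
    and reach: "\<forall>v\<in>I. \<forall>w\<in>I. \<exists>m. (p^^m) v = w"
  shows "\<exists>vs. vs \<noteq> [] \<and> distinct vs \<and> set vs = I \<and>
           (\<forall>k<length vs. p (vs ! (Suc k mod length vs)) = vs ! k)"
proof -
  define Ob where "Ob k = (p^^k) w0" for k
  define n where "n = card I"
  have powI: "(p^^k) v \<in> I" if "v \<in> I" for k v
    using that by (induction k) (auto simp: pI)
  have OI: "Ob k \<in> I" for k unfolding Ob_def using powI w0 by blast
  have OS: "Ob (Suc k) = p (Ob k)" for k unfolding Ob_def by simp
  have surj: "p ` I = I"
  proof
    show "p ` I \<subseteq> I" using pI by auto
    show "I \<subseteq> p ` I"
    proof
      fix v assume v: "v \<in> I"
      then obtain m where "(p^^m) (p v) = v" using reach pI by blast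
      then have "v = p ((p^^m) v)" by (simp add: funpow_swap1)
      then show "v \<in> p ` I" using powI[OF v] by blast
    qed
  qed
  have inj: "inj_on p I" using eq_card_imp_inj_on[OF fin, of p] surj by simp
  have injk: "inj_on (p^^k) I" for k
  proof (induction k)
    case 0 then show ?case by simp
  next
    case (Suc k)
    have "(p^^k) ` I \<subseteq> I" using powI by blast
    then have "inj_on p ((p^^k) ` I)" using inj inj_on_subset by blast
    then show ?case using Suc comp_inj_on[of "p^^k" I p] by (simp add: o_def)
  qed
  have bk: "Ob (b - a) = w0" if "a \<le> b" "Ob a = Ob b" for a b
  proof -
    have "(p^^a) (Ob (b - a)) = Ob b" unfolding Ob_def using that(1)
      by (metis funpow_add le_add_diff_inverse o_apply)
    then have "(p^^a) (Ob (b - a)) = (p^^a) w0" using that(2) unfolding Ob_def by simp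
    then show ?thesis using injk[of a] OI w0 unfolding inj_on_def by blast
  qed
  have F5: "n \<le> d" if "0 < d" "Ob d = w0" for d
  proof -
    have "I \<subseteq> Ob ` {..<d}"
    proof
      fix v assume "v \<in> I"
      then obtain m where m: "Ob m = v" using reach w0 unfolding Ob_def by blast
      have "Ob (m mod d) = Ob m" unfolding Ob_def using that(2) unfolding Ob_def by (rule funpow_mod_eq)
      moreover have "m mod d < d" using that(1) by simp
      ultimately show "v \<in> Ob ` {..<d}" using m by (metis image_eqI lessThan_iff)
    qed
    then have "card I \<le> card (Ob ` {..<d})" by (simp add: card_mono)
    also have "\<dots> \<le> d" using card_image_le[of "{..<d}" Ob] by simp
    finally show ?thesis unfolding n_def .
  qed
  have F6: "inj_on Ob {..<n}"
  proof (rule inj_onI)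
    fix a b assume ab: "a \<in> {..<n}" "b \<in> {..<n}" "Ob a = Ob b"
    show "a = b"
    proof (rule ccontr)
      assume "a \<noteq> b"
      then consider "a < b" | "b < a" by linarith
      then show False
      proof cases
        case 1
        then have "Ob (b - a) = w0" using bk[of a b] ab(3) by simp
        then have "n \<le> b - a" using F5[of "b - a"] 1 by simp
        with ab(2) show False by simp
      next
        case 2
        then have "Ob (a - b) = w0" using bk[of b a] ab(3) by simp
        then have "n \<le> a - b" using F5[of "a - b"] 2 by simp
        with ab(1) show False by simp
      qed
    qed
  qed
  have npos: "0 < n" unfolding n_def using fin w0 card_gt_0_iff by blast
  have Oimg: "Ob ` {..<n} = I"
  proof (rule card_subset_eq[OF fin])
    show "Ob ` {..<n} \<subseteq> I" using OI by auto
    show "card (Ob ` {..<n}) = card I" using card_image[OF F6] n_def by simp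
  qed
  have F7: "Ob n = w0"
  proof -
    have "Ob n \<in> Ob ` {..<n}" using Oimg OI by simp
    then obtain a where a: "a < n" "Ob n = Ob a" by auto
    then have b: "Ob (n - a) = w0" using bk[of a n] by simp
    show ?thesis
    proof (cases "a = 0")
      case True then show ?thesis using a Ob_def by simp
    next
      case False
      then have "Ob (n - a) = Ob 0" using b unfolding Ob_def by simp
      then have "n - a = 0" using F6 a(1) False unfolding inj_on_def by (metis diff_less lessThan_iff less_nat_zero_code not_gr0 npos)
      with a(1) show ?thesis by simp
    qed
  qed
  define vs where "vs = map (\<lambda>k. Ob (n - Suc k)) [0..<n]"
  have len: "length vs = n" unfolding vs_def by simp
  have nth: "vs ! k = Ob (n - Suc k)" if "k < n" for k unfolding vs_def using that by simp
  have dist: "distinct vs"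
    unfolding distinct_conv_nth len
  proof (intro allI impI)
    fix a b assume "a < n" "b < n" "a \<noteq> b"
    then have "n - Suc a \<noteq> n - Suc b" "n - Suc a < n" "n - Suc b < n" by auto
    then show "vs ! a \<noteq> vs ! b" using F6 nth \<open>a < n\<close> \<open>b < n\<close> unfolding inj_on_def by auto
  qed
  have setvs: "set vs = I"
  proof (rule card_subset_eq[OF fin])
    show "set vs \<subseteq> I" unfolding vs_def using OI by auto
    show "card (set vs) = card I" using distinct_card[OF dist] len n_def by simp
  qed
  have arc: "p (vs ! (Suc k mod length vs)) = vs ! k" if "k < length vs" for k
  proof (cases "Suc k < n")
    case True
    then have "Suc k mod length vs = Suc k" using len by simp
    then have "p (vs ! (Suc k mod length vs)) = p (Ob (n - Suc (Suc k)))" using nth True by simp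
    also have "\<dots> = Ob (Suc (n - Suc (Suc k)))" by (simp add: OS)
    also have "Suc (n - Suc (Suc k)) = n - Suc k" using True by simp
    finally show ?thesis using nth that len by simp
  next
    case False
    then have k: "Suc k = n" using that len by simp
    then have "Suc k mod length vs = 0" using len by simp
    then have "p (vs ! (Suc k mod length vs)) = p (Ob (n - 1))" using nth npos by simp
    also have "\<dots> = Ob n" using OS[of "n - 1"] npos by simp
    also have "\<dots> = Ob (n - Suc k)" using F7 k Ob_def by simp
    finally show ?thesis using nth that len by simp
  qed
  have "vs \<noteq> []" using len npos by auto
  then show ?thesis using dist setvs arc by blast
qed

lemma reachsp:
  assumes "v \<in> sp N I P w k" "\<forall>i\<in>I. N i = {p i}"
  shows "\<exists>m. (p^^m) v = w"
  using assms(1)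
proof (induction k arbitrary: v)
  case 0 then show ?case by (intro exI[of _ 0]) simp
next
  case (Suc k)
  show ?case
  proof (cases "v \<in> sp N I P w k")
    case True then show ?thesis using Suc.IH by blast
  next
    case False
    then have v: "v \<in> I" "act N P (sp N I P w k) v" using Suc.prems by auto
    have Nv: "N v = {p v}" using assms(2) v(1) by blast
    have "p v \<in> sp N I P w k"
    proof (cases "P v")
      case True then show ?thesis using v(2) Nv unfolding act_def by simp
    next
      case False then show ?thesis using v(2) Nv unfolding act_def by simp
    qed
    then obtain m where "(p^^m) (p v) = w" using Suc.IH by blast
    then have "(p^^(Suc m)) v = w" by (simp add: funpow_swap1)
    then show ?thesis by blast
  qed
qed

lemma conf_upd: "x \<in> conf I \<Longrightarrow> j \<in> I \<Longrightarrow> x(j := b) \<in> conf I"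
  unfolding conf_def by auto

lemma FIN:
  assumes an: "and_net V f" and g: "good V f I P Q" and comp: "\<forall>i\<in>I. Q i = (\<not> P i)"
    and fin: "finite I" and ne: "I \<noteq> {}"
    and p: "\<forall>i\<in>I. NB V f I i = {p i}"
    and cs: "\<forall>w\<in>I. spf (NB V f I) I P w = I"
  shows "\<exists>z. z \<in> conf (V - I) \<and> positive_circular I (subnet V f I z)"
proof -
  have IV: "I \<subseteq> V" and Pc: "P \<in> conf V" using g unfolding good_def by auto
  have pI: "\<forall>i\<in>I. p i \<in> I"
  proof
    fix i assume "i \<in> I"
    then have "NB V f I i = {p i}" using p by blast
    then show "p i \<in> I" using NB_sub[of V f I i] by simp
  qed
  have reach: "\<forall>v\<in>I. \<forall>w\<in>I. \<exists>m. (p^^m) v = w"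
  proof (intro ballI)
    fix v w assume v: "v \<in> I" and w: "w \<in> I"
    then have "v \<in> spf (NB V f I) I P w" using cs by simp
    then obtain k where k: "v \<in> sp (NB V f I) I P w k" unfolding spf_def by blast
    show "\<exists>m. (p^^m) v = w" by (rule reachsp[OF k p])
  qed
  define z where "z = (\<lambda>j. if j \<in> I then False else P j)"
  have zc: "z \<in> conf (V - I)" using Pc unfolding z_def conf_def by auto
  define h where "h = subnet V f I z"
  have hform: "h y i = (y (p i) = (P (p i) = P i))" if y: "y \<in> conf I" and i: "i \<in> I" for y i
  proof -
    define M where "M = (\<lambda>j. if j \<in> I then y j else z j)"
    have hM: "h y i = f M i" unfolding h_def subnet_def M_def using i by simp
    have Mc: "M \<in> conf V" using y Pc IV unfolding M_def z_def conf_def by auto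
    have Moff: "\<forall>j. j \<notin> I \<longrightarrow> M j = P j" unfolding M_def z_def by auto
    have "f M i = (if P i then (\<forall>j\<in>NB V f I i. M j = P j) else (\<forall>j\<in>NB V f I i. M j \<noteq> P j))"
      by (rule K[OF an g comp i Mc Moff])
    moreover have "M (p i) = y (p i)" using pI i unfolding M_def by simp
    ultimately show ?thesis using hM p i by auto
  qed
  have x0: "(\<lambda>_. False) \<in> conf I" unfolding conf_def by simp
  have posc: "pos_arc I h j i \<longleftrightarrow> i \<in> I \<and> j = p i \<and> P (p i) = P i" for j i
  proof
    assume a: "pos_arc I h j i"
    then obtain x where x: "j \<in> I" "i \<in> I" "x \<in> conf I" "h (x(j := True)) i" "\<not> h (x(j := False)) i"
      unfolding pos_arc_def by blast
    have "j = p i"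
    proof (rule ccontr)
      assume "j \<noteq> p i"
      then have "h (x(j := True)) i = h (x(j := False)) i"
        using hform[OF conf_upd[OF x(3) x(1)] x(2)] by simp
      then show False using x(4,5) by simp
    qed
    then show "i \<in> I \<and> j = p i \<and> P (p i) = P i"
      using x hform[OF conf_upd[OF x(3) x(1)] x(2)] by auto
  next
    assume a: "i \<in> I \<and> j = p i \<and> P (p i) = P i"
    then have jI: "j \<in> I" using pI by auto
    have iI: "i \<in> I" using a by simp
    have "h ((\<lambda>_. False)(j := True)) i" "\<not> h ((\<lambda>_. False)(j := False)) i"
      using hform[OF conf_upd[OF x0 jI] iI] a by auto
    then show "pos_arc I h j i" unfolding pos_arc_def using jI iI x0 by blast
  qed
  have negc: "neg_arc I h j i \<longleftrightarrow> i \<in> I \<and> j = p i \<and> P (p i) \<noteq> P i" for j i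
  proof
    assume a: "neg_arc I h j i"
    then obtain x where x: "j \<in> I" "i \<in> I" "x \<in> conf I" "\<not> h (x(j := True)) i" "h (x(j := False)) i"
      unfolding neg_arc_def by blast
    have "j = p i"
    proof (rule ccontr)
      assume "j \<noteq> p i"
      then have "h (x(j := True)) i = h (x(j := False)) i"
        using hform[OF conf_upd[OF x(3) x(1)] x(2)] by simp
      then show False using x(4,5) by simp
    qed
    then show "i \<in> I \<and> j = p i \<and> P (p i) \<noteq> P i"
      using x hform[OF conf_upd[OF x(3) x(1)] x(2)] by auto
  next
    assume a: "i \<in> I \<and> j = p i \<and> P (p i) \<noteq> P i"
    then have jI: "j \<in> I" using pI by auto
    have iI: "i \<in> I" using a by simp
    have "\<not> h ((\<lambda>_. False)(j := True)) i" "h ((\<lambda>_. False)(j := False)) i"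
      using hform[OF conf_upd[OF x0 jI] iI] a by auto
    then show "neg_arc I h j i" unfolding neg_arc_def using jI iI x0 by blast
  qed
  have c1: "\<forall>j i. \<not> (pos_arc I h j i \<and> neg_arc I h j i)" using posc negc by auto
  obtain w0 where w0: "w0 \<in> I" using ne by auto
  obtain vs where vs: "vs \<noteq> []" "distinct vs" "set vs = I"
      "\<forall>k<length vs. p (vs ! (Suc k mod length vs)) = vs ! k"
    using cyc[OF fin w0 pI reach] by blast
  let ?n = "length vs"
  have arcs: "{(j, i). pos_arc I h j i \<or> neg_arc I h j i} =
        {(vs ! k, vs ! (Suc k mod ?n)) | k. k < ?n}"
  proof (intro set_eqI iffI)
    fix e assume "e \<in> {(j, i). pos_arc I h j i \<or> neg_arc I h j i}"
    then obtain j i where e: "e = (j, i)" "i \<in> I" "j = p i" using posc negc by auto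
    then obtain m where m: "m < ?n" "vs ! m = i" using vs(3) by (metis in_set_conv_nth)
    define k where "k = (if m = 0 then ?n - 1 else m - 1)"
    have k: "k < ?n" "Suc k mod ?n = m" using m(1) vs(1) unfolding k_def by auto
    have "vs ! k = p i" using vs(4) k m(2) by metis
    then have "e = (vs ! k, vs ! (Suc k mod ?n))" using e k m by simp
    then show "e \<in> {(vs ! k, vs ! (Suc k mod ?n)) | k. k < ?n}" using k(1) by blast
  next
    fix e assume "e \<in> {(vs ! k, vs ! (Suc k mod ?n)) | k. k < ?n}"
    then obtain k where k: "k < ?n" "e = (vs ! k, vs ! (Suc k mod ?n))" by blast
    have "Suc k mod ?n < ?n" using vs(1) by simp
    then have iI: "vs ! (Suc k mod ?n) \<in> I" using vs(3) nth_mem by blast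
    have "vs ! k = p (vs ! (Suc k mod ?n))" using vs(4) k(1) by simp
    then show "e \<in> {(j, i). pos_arc I h j i \<or> neg_arc I h j i}" using k(2) iI posc negc by auto
  qed
  have surj: "p ` I = I"
  proof
    show "p ` I \<subseteq> I" using pI by auto
    show "I \<subseteq> p ` I"
    proof
      fix v assume v: "v \<in> I"
      then obtain m where "(p^^m) (p v) = v" using reach pI by blast
      then have "v = p ((p^^m) v)" by (simp add: funpow_swap1)
      moreover have "(p^^m) v \<in> I" using v by (induction m) (auto simp: pI)
      ultimately show "v \<in> p ` I" by blast
    qed
  qed
  have bij: "bij_betw p I I"
    unfolding bij_betw_def using eq_card_imp_inj_on[OF fin, of p] surj by simp
  define A where "A = {i \<in> I. P (p i) \<noteq> P i}"
  have negset: "{(j, i). neg_arc I h j i} = (\<lambda>i. (p i, i)) ` A"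
    unfolding A_def using negc by auto
  have cardneg: "card {(j, i). neg_arc I h j i} = card A"
    unfolding negset by (rule card_image) (auto simp: inj_on_def)
  have s1: "(\<Sum>i\<in>I. (of_bool (P (p i)) :: nat)) = (\<Sum>i\<in>I. of_bool (P i))"
    using sum.reindex_bij_betw[OF bij, of "\<lambda>i. (of_bool (P i) :: nat)"] by simp
  have s2: "(\<Sum>i\<in>I. (of_bool (P (p i) \<noteq> P i) :: nat) + 2 * of_bool (P (p i) \<and> P i)) =
        (\<Sum>i\<in>I. (of_bool (P (p i)) :: nat) + of_bool (P i))"
    by (rule sum.cong) auto
  have s3: "(\<Sum>i\<in>I. (of_bool (P (p i) \<noteq> P i) :: nat)) = card A"
  proof -
    have "A = I \<inter> {i. P (p i) \<noteq> P i}" unfolding A_def by blast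
    then show ?thesis using fin by simp
  qed
  have "card A + 2 * (\<Sum>i\<in>I. (of_bool (P (p i) \<and> P i) :: nat)) =
        (\<Sum>i\<in>I. (of_bool (P i) :: nat)) + (\<Sum>i\<in>I. of_bool (P i))"
    using s2 s1 s3 by (simp only: sum.distrib sum_distrib_left)
  then have "even (card A)" by presburger
  then have c3: "even (card {(j, i). neg_arc I h j i})" using cardneg by simp
  have "positive_circular I h"
    unfolding positive_circular_def using c1 c3 vs(1,2,3) arcs by blast
  then show ?thesis using zc h_def by blast
qed

lemma noarc_eq:
  assumes "j \<in> I" "i \<in> I" "\<not> pos_arc I h j i" "\<not> neg_arc I h j i" "x \<in> conf I"
  shows "h (x(j := True)) i = h (x(j := False)) i"
  using assms unfolding pos_arc_def neg_arc_def by blast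

lemma indep_aux:
  assumes fin: "finite D" and iI: "i \<in> I"
    and noarc: "\<forall>j\<in>I. j \<noteq> q \<longrightarrow> \<not> pos_arc I h j i \<and> \<not> neg_arc I h j i"
  shows "\<forall>y y'. y \<in> conf I \<longrightarrow> y' \<in> conf I \<longrightarrow> {j. y j \<noteq> y' j} = D \<longrightarrow> D \<subseteq> I - {q}
           \<longrightarrow> h y i = h y' i"
  using fin
proof (induction D rule: finite_induct)
  case empty
  show ?case
  proof (intro allI impI)
    fix y y' :: "'a \<Rightarrow> bool" assume "{j. y j \<noteq> y' j} = {}"
    then have "y = y'" by auto
    then show "h y i = h y' i" by simp
  qed
next
  case (insert d D)
  show ?case
  proof (intro allI impI)
    fix y y' :: "'a \<Rightarrow> bool"
    assume y: "y \<in> conf I" and y': "y' \<in> conf I" and dif: "{j. y j \<noteq> y' j} = insert d D"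
      and sub: "insert d D \<subseteq> I - {q}"
    have dI: "d \<in> I" "d \<noteq> q" using sub by auto
    define y'' where "y'' = y'(d := y d)"
    have y'': "y'' \<in> conf I" unfolding y''_def by (rule conf_upd[OF y' dI(1)])
    have "{j. y j \<noteq> y'' j} = D" using dif insert(2) unfolding y''_def by auto
    then have e1: "h y i = h y'' i" using insert(3) y y'' sub by blast
    have na: "\<not> pos_arc I h d i" "\<not> neg_arc I h d i" using noarc dI by auto
    have e2: "h (y'(d := True)) i = h (y'(d := False)) i" by (rule noarc_eq[OF dI(1) iI na y'])
    have "h y'' i = h y' i"
    proof (cases "y d")
      case True
      then have "y' d = False" using dif by auto
      then have "y' = y'(d := False)" by (intro ext) simp
      then show ?thesis unfolding y''_def using True e2 by metis
    next
      case False
      then have "y' d = True" using dif by auto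
      then have "y' = y'(d := True)" by (intro ext) simp
      then show ?thesis unfolding y''_def using False e2 by metis
    qed
    with e1 show "h y i = h y' i" by simp
  qed
qed

lemma indep:
  assumes fin: "finite I" and iI: "i \<in> I"
    and noarc: "\<forall>j\<in>I. j \<noteq> q \<longrightarrow> \<not> pos_arc I h j i \<and> \<not> neg_arc I h j i"
    and y: "y \<in> conf I" and y': "y' \<in> conf I" and yq: "y q = y' q"
  shows "h y i = h y' i"
proof -
  have sub: "{j. y j \<noteq> y' j} \<subseteq> I - {q}" using y y' yq unfolding conf_def by auto
  then have "finite {j. y j \<noteq> y' j}" using fin finite_subset by blast
  then show ?thesis using indep_aux[OF _ iI noarc] y y' sub by blast
qed

lemma sign_form:
  assumes fin: "finite I" and iI: "i \<in> I" and qI: "q \<in> I"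
    and noarc: "\<forall>j\<in>I. j \<noteq> q \<longrightarrow> \<not> pos_arc I h j i \<and> \<not> neg_arc I h j i"
    and arc: "pos_arc I h q i \<or> neg_arc I h q i" and nb: "\<not> (pos_arc I h q i \<and> neg_arc I h q i)"
    and y: "y \<in> conf I"
  shows "h y i = (y q = pos_arc I h q i)"
proof (cases "pos_arc I h q i")
  case True
  then obtain x where x: "x \<in> conf I" "h (x(q := True)) i" "\<not> h (x(q := False)) i"
    unfolding pos_arc_def by blast
  have "h y i = h (x(q := y q)) i"
    by (rule indep[OF fin iI noarc y conf_upd[OF x(1) qI]]) simp
  then show ?thesis using x True by (cases "y q") auto
next
  case False
  then have "neg_arc I h q i" using arc by simp
  then obtain x where x: "x \<in> conf I" "\<not> h (x(q := True)) i" "h (x(q := False)) i"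
    unfolding neg_arc_def by blast
  have "h y i = h (x(q := y q)) i"
    by (rule indep[OF fin iI noarc y conf_upd[OF x(1) qI]]) simp
  then show ?thesis using x False by (cases "y q") auto
qed

lemma suc_mod_inj:
  assumes "k < n" "k' < n" "Suc k mod n = Suc k' mod n"
  shows "k = k'"
proof -
  have a: "Suc k mod n = (if Suc k = n then 0 else Suc k)" using assms(1) by auto
  have b: "Suc k' mod n = (if Suc k' = n then 0 else Suc k')" using assms(2) by auto
  show ?thesis using a b assms by (auto split: if_splits)
qed

lemma PC2:
  assumes fin: "finite I" and pc: "positive_circular I h"
  shows "\<not> at_most_one_fixed_point I h"
proof -
  have c1: "\<forall>j i. \<not> (pos_arc I h j i \<and> neg_arc I h j i)" using pc unfolding positive_circular_def by blast
  obtain vs where vs: "vs \<noteq> []" "distinct vs" "set vs = I"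
    "{(j, i). pos_arc I h j i \<or> neg_arc I h j i} = {(vs ! k, vs ! (Suc k mod length vs)) | k. k < length vs}"
    and ev: "even (card {(j, i). neg_arc I h j i})"
    using pc unfolding positive_circular_def by blast
  define n where "n = length vs"
  have npos: "0 < n" using vs(1) n_def by simp
  define e where "e k = (vs ! k, vs ! (Suc k mod n))" for k
  have arcs: "pos_arc I h j i \<or> neg_arc I h j i \<longleftrightarrow> (\<exists>k<n. (j, i) = e k)" for j i
  proof -
    have "(j, i) \<in> {(j, i). pos_arc I h j i \<or> neg_arc I h j i} \<longleftrightarrow> (\<exists>k<n. (j, i) = e k)"
      unfolding vs(4) e_def n_def by blast
    then show ?thesis by simp
  qed
  have vsI: "vs ! k \<in> I" if "k < n" for k using that vs(3) n_def nth_mem by blast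
  have modlt: "Suc k mod n < n" for k using npos by simp
  define \<sigma> where "\<sigma> k = pos_arc I h (vs ! k) (vs ! (Suc k mod n))" for k
  have hstep: "h y (vs ! (Suc k mod n)) = (y (vs ! k) = \<sigma> k)" if k: "k < n" and y: "y \<in> conf I" for k y
  proof -
    let ?i = "vs ! (Suc k mod n)" and ?q = "vs ! k"
    have arc: "pos_arc I h ?q ?i \<or> neg_arc I h ?q ?i" using arcs[of ?q ?i] k unfolding e_def by blast
    have noarc: "\<forall>j\<in>I. j \<noteq> ?q \<longrightarrow> \<not> pos_arc I h j ?i \<and> \<not> neg_arc I h j ?i"
    proof (intro ballI impI)
      fix j assume j: "j \<in> I" "j \<noteq> ?q"
      show "\<not> pos_arc I h j ?i \<and> \<not> neg_arc I h j ?i"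
      proof (rule ccontr)
        assume "\<not> (\<not> pos_arc I h j ?i \<and> \<not> neg_arc I h j ?i)"
        then obtain k' where k': "k' < n" "(j, ?i) = e k'" using arcs by blast
        then have "vs ! (Suc k' mod n) = vs ! (Suc k mod n)" "j = vs ! k'" unfolding e_def by auto
        then have "Suc k' mod n = Suc k mod n" using nth_eq_iff_index_eq[OF vs(2)] modlt n_def by metis
        then have "k' = k" using suc_mod_inj k k'(1) by metis
        with \<open>j = vs ! k'\<close> j(2) show False by simp
      qed
    qed
    show ?thesis unfolding \<sigma>_def
      by (rule sign_form[OF fin vsI[OF modlt] vsI[OF k] noarc arc _ y]) (use c1 in blast)
  qed
  define Y where "Y k = even (card {m. m < k \<and> \<not> \<sigma> m})" for k
  have Ysuc: "Y (Suc k) = (Y k = \<sigma> k)" for k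
  proof -
    have "{m. m < Suc k \<and> \<not> \<sigma> m} = (if \<sigma> k then {m. m < k \<and> \<not> \<sigma> m} else insert k {m. m < k \<and> \<not> \<sigma> m})"
      by (auto simp: less_Suc_eq)
    then show ?thesis unfolding Y_def by auto
  qed
  have Y0: "Y 0 = True" unfolding Y_def by simp
  have cardsig: "card {m. m < n \<and> \<not> \<sigma> m} = card {(j, i). neg_arc I h j i}"
  proof -
    have "{(j, i). neg_arc I h j i} = e ` {m. m < n \<and> \<not> \<sigma> m}"
    proof (intro set_eqI iffI)
      fix x assume "x \<in> {(j, i). neg_arc I h j i}"
      then obtain j i where x: "x = (j, i)" "neg_arc I h j i" by auto
      then obtain k where k: "k < n" "(j, i) = e k" using arcs by blast
      then have "\<not> \<sigma> k" using x(2) c1 unfolding \<sigma>_def e_def by auto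
      then show "x \<in> e ` {m. m < n \<and> \<not> \<sigma> m}" using k x by auto
    next
      fix x assume "x \<in> e ` {m. m < n \<and> \<not> \<sigma> m}"
      then obtain k where k: "k < n" "\<not> \<sigma> k" "x = e k" by auto
      have "pos_arc I h (vs ! k) (vs ! (Suc k mod n)) \<or> neg_arc I h (vs ! k) (vs ! (Suc k mod n))"
        using arcs k(1) unfolding e_def by blast
      then show "x \<in> {(j, i). neg_arc I h j i}" using k unfolding \<sigma>_def e_def by auto
    qed
    moreover have "inj_on e {m. m < n \<and> \<not> \<sigma> m}"
    proof (rule inj_onI)
      fix a b assume "a \<in> {m. m < n \<and> \<not> \<sigma> m}" "b \<in> {m. m < n \<and> \<not> \<sigma> m}" "e a = e b"
      then show "a = b" unfolding e_def using nth_eq_iff_index_eq[OF vs(2)] n_def by auto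
    qed
    ultimately show ?thesis by (simp add: card_image)
  qed
  have Yn: "Y n" unfolding Y_def using cardsig ev by simp
  define y where "y v = (\<exists>k<n. vs ! k = v \<and> Y k)" for v
  have yc: "y \<in> conf I" unfolding conf_def y_def using vsI by auto
  have yk: "y (vs ! k) = Y k" if "k < n" for k
    unfolding y_def using that nth_eq_iff_index_eq[OF vs(2)] n_def by auto
  have pred: "\<exists>k<n. Suc k mod n = m" if "m < n" for m
  proof (cases m)
    case 0 then show ?thesis using npos by (intro exI[of _ "n - 1"]) auto
  next
    case (Suc m') then show ?thesis using that by (intro exI[of _ m']) auto
  qed
  have yfix: "h y i = y i" if iI: "i \<in> I" for i
  proof -
    obtain m where m: "m < n" "vs ! m = i" using iI vs(3) n_def by (metis in_set_conv_nth)
    obtain k where k: "k < n" "Suc k mod n = m" using pred[OF m(1)] by blast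
    have "h y i = (Y k = \<sigma> k)" using hstep[OF k(1) yc] k(2) m(2) yk[OF k(1)] by simp
    also have "\<dots> = Y (Suc k)" by (simp add: Ysuc)
    also have "\<dots> = Y m"
    proof (cases "Suc k = n")
      case True
      then have "m = 0" using k(2) by simp
      then show ?thesis using True Yn Y0 by simp
    next
      case False
      then have "m = Suc k" using k by simp
      then show ?thesis by simp
    qed
    also have "\<dots> = y i" using yk[OF m(1)] m(2) by simp
    finally show ?thesis .
  qed
  define y' where "y' v = (v \<in> I \<and> \<not> y v)" for v
  have y'c: "y' \<in> conf I" unfolding conf_def y'_def by auto
  have y'fix: "h y' i = y' i" if iI: "i \<in> I" for i
  proof -
    obtain m where m: "m < n" "vs ! m = i" using iI vs(3) n_def by (metis in_set_conv_nth)
    obtain k where k: "k < n" "Suc k mod n = m" using pred[OF m(1)] by blast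
    have "h y' i = (y' (vs ! k) = \<sigma> k)" using hstep[OF k(1) y'c] k(2) m(2) by simp
    moreover have "h y i = (y (vs ! k) = \<sigma> k)" using hstep[OF k(1) yc] k(2) m(2) by simp
    moreover have "y' (vs ! k) = (\<not> y (vs ! k))" unfolding y'_def using vsI[OF k(1)] by simp
    ultimately have "h y' i = (\<not> h y i)" by blast
    then show ?thesis using yfix[OF iI] iI unfolding y'_def by simp
  qed
  have "y \<noteq> y'"
  proof
    assume "y = y'"
    then have "y (vs ! 0) = y' (vs ! 0)" by simp
    then show False unfolding y'_def using vsI[OF npos] by simp
  qed
  then show ?thesis unfolding at_most_one_fixed_point_def using yc y'c yfix y'fix by blast
qed

lemma MAIN:
  assumes an: "and_net V f" and finV: "finite V"
  shows "I \<noteq> {} \<Longrightarrow> good V f I P Q \<Longrightarrow> P \<noteq> Q \<Longrightarrow>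
    \<exists>I' z'. I' \<noteq> {} \<and> I' \<subseteq> V \<and> z' \<in> conf (V - I') \<and> positive_circular I' (subnet V f I' z')"
proof (induction "card I" arbitrary: I P Q rule: less_induct)
  case less
  have IV: "I \<subseteq> V" using less.prems(2) unfolding good_def by auto
  have fin: "finite I" using IV finV finite_subset by blast
  have offI: "\<forall>j. j \<notin> I \<longrightarrow> P j = Q j" using less.prems(2) unfolding good_def by auto
  obtain k where k: "k \<in> I" "P k \<noteq> Q k"
  proof -
    obtain k where "P k \<noteq> Q k" using less.prems(3) by (auto simp: fun_eq_iff)
    moreover then have "k \<in> I" using offI by auto
    ultimately show ?thesis using that by blast
  qed
  show ?case
  proof (cases "\<exists>i\<in>I. P i = Q i")
    case True
    then obtain i where i: "i \<in> I" "P i = Q i" by blast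
    have ki: "k \<noteq> i" using k i by auto
    have g': "good V f (I - {i}) P Q"
      using less.prems(2) i unfolding good_def by auto
    have c: "card (I - {i}) < card I" using fin i(1) by (rule card_Diff1_less)
    have ne: "I - {i} \<noteq> {}" using k ki by auto
    show ?thesis by (rule less.hyps[OF c ne g' less.prems(3)])
  next
    case False
    then have comp: "\<forall>i\<in>I. Q i = (\<not> P i)" by auto
    have comp': "\<forall>i\<in>I. P i = (\<not> Q i)" using comp by auto
    have g: "good V f I P Q" by (rule less.prems(2))
    have gs: "good V f I Q P" using good_sym[OF g] .
    let ?N = "NB V f I"
    show ?thesis
    proof (cases "\<exists>w\<in>I. spf ?N I P w \<noteq> I")
      case True
      from True obtain w where w: "w \<in> I" "spf ?N I P w \<noteq> I" ..
      obtain W where W: "good V f (I - {w}) P W" "P \<noteq> W" "I - {w} \<noteq> {}"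
        using REC[OF an g comp fin w] by blast
      have c: "card (I - {w}) < card I" using fin w(1) by (rule card_Diff1_less)
      show ?thesis by (rule less.hyps[OF c W(3) W(1) W(2)])
    next
      case False
      note cP = False
      show ?thesis
      proof (cases "\<exists>w\<in>I. spf ?N I Q w \<noteq> I")
        case True
        from True obtain w where w: "w \<in> I" "spf ?N I Q w \<noteq> I" ..
        obtain W where W: "good V f (I - {w}) Q W" "Q \<noteq> W" "I - {w} \<noteq> {}"
          using REC[OF an gs comp' fin w] by blast
        have c: "card (I - {w}) < card I" using fin w(1) by (rule card_Diff1_less)
        show ?thesis by (rule less.hyps[OF c W(3) W(1) W(2)])
      next
        case False
        note cQ = False
        have cP': "\<forall>w\<in>I. spf ?N I P w = I" using cP by simp
        have cQ': "\<forall>w\<in>I. spf ?N I Q w = I" using cQ by simp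
        have NI: "\<forall>i\<in>I. ?N i \<subseteq> I \<and> ?N i \<noteq> {}"
        proof
          fix i assume i: "i \<in> I"
          show "?N i \<subseteq> I \<and> ?N i \<noteq> {}" using NB_sub[of V f I i] NB_ne[OF an g comp i] by simp
        qed
        have sing: "\<exists>l. ?N w = {l}" if w: "w \<in> I" for w
        proof (cases "\<exists>v0\<in>I. v0 \<noteq> w")
          case True
          then obtain v0 where v0: "v0 \<in> I" "v0 \<noteq> w" by blast
          have a: "spf ?N I P w = I" using bspec[OF cP' w] .
          have b: "spf ?N I Q w = I" using bspec[OF cQ' w] .
          show ?thesis
          proof (cases "P w")
            case False
            from LV[OF fin NI comp w False v0 a cQ'] show ?thesis .
          next
            case True
            then have nQ: "\<not> Q w" using comp w by simp
            from LV[OF fin NI comp' w nQ v0 b cP'] show ?thesis .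
          qed
        next
          case False
          have s1: "?N w \<subseteq> I" "?N w \<noteq> {}" using bspec[OF NI w] by simp_all
          have s2: "I \<subseteq> {w}" using False by blast
          from s1 s2 have "?N w = {w}" by auto
          then show ?thesis by blast
        qed
        define p where "p w = (SOME l. ?N w = {l})" for w
        have p: "\<forall>i\<in>I. ?N i = {p i}"
        proof
          fix i assume "i \<in> I"
          then show "?N i = {p i}" unfolding p_def by (rule someI_ex[OF sing])
        qed
        obtain z where "z \<in> conf (V - I)" "positive_circular I (subnet V f I z)"
          using FIN[OF an g comp fin less.prems(1) p cP'] by blast
        then show ?thesis using less.prems(1) IV by blast
      qed
    qed
  qed
qed

theorem corollary10:
  fixes V :: "'v set" and f :: "('v \<Rightarrow> bool) \<Rightarrow> ('v \<Rightarrow> bool)"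
  assumes "finite V" and "V \<noteq> {}" and "and_net V f"
  shows "(\<forall>I z. I \<noteq> {} \<and> I \<subseteq> V \<and> z \<in> conf (V - I) \<longrightarrow>
             at_most_one_fixed_point I (subnet V f I z))
         \<longleftrightarrow>
         \<not> (\<exists>I z. I \<noteq> {} \<and> I \<subseteq> V \<and> z \<in> conf (V - I) \<and>
             positive_circular I (subnet V f I z))"
proof
  assume all: "\<forall>I z. I \<noteq> {} \<and> I \<subseteq> V \<and> z \<in> conf (V - I) \<longrightarrow>
             at_most_one_fixed_point I (subnet V f I z)"
  show "\<not> (\<exists>I z. I \<noteq> {} \<and> I \<subseteq> V \<and> z \<in> conf (V - I) \<and>
             positive_circular I (subnet V f I z))"
  proof
    assume "\<exists>I z. I \<noteq> {} \<and> I \<subseteq> V \<and> z \<in> conf (V - I) \<and> positive_circular I (subnet V f I z)"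
    then obtain I z where Iz: "I \<noteq> {}" "I \<subseteq> V" "z \<in> conf (V - I)" "positive_circular I (subnet V f I z)"
      by blast
    have "finite I" using Iz(2) assms(1) finite_subset by blast
    then have "\<not> at_most_one_fixed_point I (subnet V f I z)" using PC2 Iz(4) by blast
    then show False using all Iz by blast
  qed
next
  assume none: "\<not> (\<exists>I z. I \<noteq> {} \<and> I \<subseteq> V \<and> z \<in> conf (V - I) \<and>
             positive_circular I (subnet V f I z))"
  show "\<forall>I z. I \<noteq> {} \<and> I \<subseteq> V \<and> z \<in> conf (V - I) \<longrightarrow>
             at_most_one_fixed_point I (subnet V f I z)"
  proof (intro allI impI)
    fix I z assume Iz: "I \<noteq> {} \<and> I \<subseteq> V \<and> z \<in> conf (V - I)"
    show "at_most_one_fixed_point I (subnet V f I z)"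
      unfolding at_most_one_fixed_point_def
    proof (intro ballI impI)
      fix x y assume x: "x \<in> conf I" and y: "y \<in> conf I"
        and fx: "\<forall>i\<in>I. subnet V f I z x i = x i" and fy: "\<forall>i\<in>I. subnet V f I z y i = y i"
      show "x = y"
      proof (rule ccontr)
        assume xy: "x \<noteq> y"
        define P where "P = (\<lambda>j. if j \<in> I then x j else z j)"
        define Q where "Q = (\<lambda>j. if j \<in> I then y j else z j)"
        have IV: "I \<subseteq> V" using Iz by blast
        have zc: "z \<in> conf (V - I)" using Iz by blast
        have Pc: "P \<in> conf V" using x zc IV unfolding P_def conf_def by auto
        have Qc: "Q \<in> conf V" using y zc IV unfolding Q_def conf_def by auto
        have g: "good V f I P Q" unfolding good_def
        proof (intro conjI allI impI ballI)
          show "I \<subseteq> V" by (rule IV)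
          show "P \<in> conf V" by (rule Pc)
          show "Q \<in> conf V" by (rule Qc)
          fix j assume "j \<notin> I" then show "P j = Q j" unfolding P_def Q_def by simp
        next
          fix i assume i: "i \<in> I"
          then show "f P i = P i" using fx unfolding subnet_def P_def by auto
        next
          fix i assume i: "i \<in> I"
          then show "f Q i = Q i" using fy unfolding subnet_def Q_def by auto
        qed
        have "P \<noteq> Q"
        proof
          assume "P = Q"
          have "x = y"
          proof
            fix j show "x j = y j"
            proof (cases "j \<in> I")
              case True then show ?thesis using \<open>P = Q\<close> unfolding P_def Q_def by (metis (full_types))
            next
              case False then show ?thesis using x y unfolding conf_def by auto
            qed
          qed
          with xy show False by simp
        qed
        have "I \<noteq> {}" using Iz by blast
        from MAIN[OF assms(3) assms(1) this g \<open>P \<noteq> Q\<close>] none show False by blast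
      qed
    qed
  qed
qed

end
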